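(* Let $\mathcal C$ be a category of partitions and $p\in P(0,l)$, written as a word $p=a_{i(1)}^{k_1}a_{i(2)}^{k_2}\cdots a_{i(n)}^{k_n}$ with $k_j\ge 1$ and $a_{i(j)}\neq a_{i(j+1)}$ for $j=1,\dots,n-1$. (a) Put $k_j'=1$ if $k_j$ is odd and $k_j'=2$ if $k_j$ is even, and $p'=a_{i(1)}^{k_1'}\cdots a_{i(n)}^{k_n'}$. If $b_4\in\mathcal C$, then $p\in\mathcal C$ if and only if $p'\in\mathcal C$. (b) Put $k_j''=1$ if $k_j$ is odd and $k_j''=0$ if $k_j$ is even, and $p''=a_{i(1)}^{k_1''}\cdots a_{i(n)}^{k_n''}$ (possibly the empty partition $\emptyset$). If $\rho\in\mathcal C$, then $p\in\mathcal C$ if and only if $p''\in\mathcal C$.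
   Context: A partition $p\in P(k,l)$ ($k,l\ge 0$) is a partition of the disjoint union of $k$ ordered upper points $1,\dots,k$ and $l$ ordered lower points $1',\dots,l'$ into nonempty disjoint subsets called blocks; $P=\bigcup_{k,l}P(k,l)$, and $\emptyset\in P(0,0)$ is the empty partition, which belongs to every category of partitions. Operations on partitions: the tensor product $p\otimes q$ (horizontal juxtaposition, $q$ placed to the right of $p$); the composition of $p\in P(k,l)$ with $q\in P(l,m)$ (stack $p$ on top of $q$, identify the lower points of $p$ with the upper points of $q$, merge blocks connected through these middle points, then erase the middle points and any block lying entirely among them), giving a partition in $P(k,m)$; the involution $p^*$ (reflection of $p$ upside down); and rotation (moving the leftmost, resp. rightmost, point of one row to the leftmost, resp. rightmost, position of the other row, keeping the blocks). A category of partitions is a subset $\mathcal C\subseteq P$ containing the pair partition $\sqcap\in P(0,2)$ (one block consisting of two lower points) and the identity partition $|\in P(1,1)$ (one block $\{1,1'\}$), and closed under these four operations. Special partitions: the four block $b_4\in P(0,4)$ (one block of four lower points); the pair positioner $\rho\in P(3,3)$ with blocks $\{1,2,2',3'\}$ and $\{3,1'\}$. Words: a partition $p\in P(0,l)$ is identified with a word $x_1x_2\cdots x_l$ of length $l$ in letters $a_1,a_2,\dots$, where the lower points $1,\dots,l$ (left to right) are labelled by letters, two points carrying the same letter if and only if they lie in the same block; conversely every word of length $l$ defines a partition in $P(0,l)$ in this way. Exponent notation $a^k$ means $k$ consecutive points labelled $a$. *)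

theory Defs
  imports "HOL-Library.Disjoint_Sets"
begin

text \<open>A point is (False, i) for the upper point i+1 and (True, j) for the lower
point (j+1)'; indices are 0-based. A partition in P(k,l) is a triple (k, l, B)
where B is a set partition (set of nonempty disjoint blocks) of the k+l points.\<close>

type_synonym point = "bool \<times> nat"
type_synonym partition = "nat \<times> nat \<times> point set set"

definition upp :: "partition \<Rightarrow> nat" where "upp p = fst p"
definition low :: "partition \<Rightarrow> nat" where "low p = fst (snd p)"
definition blk :: "partition \<Rightarrow> point set set" where "blk p = snd (snd p)"

definition pts :: "nat \<Rightarrow> nat \<Rightarrow> point set" where
  "pts k l = {(False, i) | i. i < k} \<union> {(True, j) | j. j < l}"

definition is_part :: "partition \<Rightarrow> bool" where
  "is_part p \<longleftrightarrow> partition_on (pts (upp p) (low p)) (blk p)"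

definition shift_pt :: "nat \<Rightarrow> nat \<Rightarrow> point \<Rightarrow> point" where
  "shift_pt k l x = (if fst x then (True, snd x + l) else (False, snd x + k))"

definition tensor :: "partition \<Rightarrow> partition \<Rightarrow> partition" where
  "tensor p q = (upp p + upp q, low p + low q,
      blk p \<union> (\<lambda>X. shift_pt (upp p) (low p) ` X) ` blk q)"

definition invol :: "partition \<Rightarrow> partition" where
  "invol p = (low p, upp p, (\<lambda>X. (\<lambda>x. (\<not> fst x, snd x)) ` X) ` blk p)"

text \<open>Composition of p in P(k,l) (on top) with q in P(l,m) (below).
Points of the stacked picture: (0,i) upper of p, (1,j) middle, (2,t) lower of q.\<close>
definition emb_top :: "point \<Rightarrow> nat \<times> nat" where
  "emb_top x = (if fst x then (1, snd x) else (0, snd x))"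
definition emb_bot :: "point \<Rightarrow> nat \<times> nat" where
  "emb_bot x = (if fst x then (2, snd x) else (1, snd x))"
definition emb_res :: "point \<Rightarrow> nat \<times> nat" where
  "emb_res x = (if fst x then (2, snd x) else (0, snd x))"

definition block_rel :: "(point \<Rightarrow> nat \<times> nat) \<Rightarrow> point set set \<Rightarrow> ((nat \<times> nat) \<times> (nat \<times> nat)) set" where
  "block_rel e B = {(e x, e y) | x y. \<exists>X\<in>B. x \<in> X \<and> y \<in> X}"

definition comp :: "partition \<Rightarrow> partition \<Rightarrow> partition" where
  "comp p q = (upp p, low q,
     pts (upp p) (low q) //
       {(x, y). x \<in> pts (upp p) (low q) \<and> y \<in> pts (upp p) (low q) \<and>
          (emb_res x, emb_res y) \<in> (block_rel emb_top (blk p) \<union> block_rel emb_bot (blk q))\<^sup>*})"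

text \<open>Rotations (each applied when the row from which the point is taken is nonempty).\<close>
definition rot_map :: "(point \<Rightarrow> point) \<Rightarrow> nat \<Rightarrow> nat \<Rightarrow> partition \<Rightarrow> partition" where
  "rot_map f k l p = (k, l, (\<lambda>X. f ` X) ` blk p)"

definition rot_left_down :: "partition \<Rightarrow> partition" where
  "rot_left_down p = rot_map (\<lambda>x. if x = (False, 0) then (True, 0)
      else if fst x then (True, snd x + 1) else (False, snd x - 1))
      (upp p - 1) (low p + 1) p"

definition rot_left_up :: "partition \<Rightarrow> partition" where
  "rot_left_up p = rot_map (\<lambda>x. if x = (True, 0) then (False, 0)
      else if fst x then (True, snd x - 1) else (False, snd x + 1))
      (upp p + 1) (low p - 1) p"

definition rot_right_down :: "partition \<Rightarrow> partition" where
  "rot_right_down p = rot_map (\<lambda>x. if x = (False, upp p - 1) then (True, low p) else x)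
      (upp p - 1) (low p + 1) p"

definition rot_right_up :: "partition \<Rightarrow> partition" where
  "rot_right_up p = rot_map (\<lambda>x. if x = (True, low p - 1) then (False, upp p) else x)
      (upp p + 1) (low p - 1) p"

definition pair_part :: partition where
  "pair_part = (0, 2, {{(True, 0), (True, 1)}})"
definition id_part :: partition where
  "id_part = (1, 1, {{(False, 0), (True, 0)}})"
definition four_block :: partition where
  "four_block = (0, 4, {{(True, 0), (True, 1), (True, 2), (True, 3)}})"
definition pair_positioner :: partition where
  "pair_positioner = (3, 3, {{(False, 0), (False, 1), (True, 1), (True, 2)},
                             {(False, 2), (True, 0)}})"

definition category_of_partitions :: "partition set \<Rightarrow> bool" where
  "category_of_partitions C \<longleftrightarrow>
     (\<forall>p\<in>C. is_part p) \<and> pair_part \<in> C \<and> id_part \<in> C \<and>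
     (\<forall>p\<in>C. \<forall>q\<in>C. tensor p q \<in> C) \<and>
     (\<forall>p\<in>C. \<forall>q\<in>C. low p = upp q \<longrightarrow> comp p q \<in> C) \<and>
     (\<forall>p\<in>C. invol p \<in> C) \<and>
     (\<forall>p\<in>C. upp p \<ge> 1 \<longrightarrow> rot_left_down p \<in> C \<and> rot_right_down p \<in> C) \<and>
     (\<forall>p\<in>C. low p \<ge> 1 \<longrightarrow> rot_left_up p \<in> C \<and> rot_right_up p \<in> C)"

text \<open>Words: a word of letters (natural numbers) defines a partition in P(0, length w):
lower points with the same letter form a block.\<close>
definition word_part :: "nat list \<Rightarrow> partition" where
  "word_part w = (0, length w,
     {{(True, j) | j. j < length w \<and> w ! j = a} | a. a \<in> set w})"

definition exp_word :: "nat list \<Rightarrow> nat list \<Rightarrow> nat list" where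
  "exp_word xs ks = concat (map2 (\<lambda>a k. replicate k a) xs ks)"

end

theory Submission
  imports Defs
begin


lemma upp_simp[simp]: "upp (a,b,c) = a" by (simp add: upp_def)
lemma low_simp[simp]: "low (a,b,c) = b" by (simp add: low_def)
lemma blk_simp[simp]: "blk (a,b,c) = c" by (simp add: blk_def)

definition idn :: "nat \<Rightarrow> partition" where
  "idn n = (n, n, {{(False,t),(True,t)} | t. t<n})"

lemma empty_in:
  assumes "category_of_partitions C" shows "(0,0,{}) \<in> C"
proof -
  have "pair_part \<in> C" "invol pair_part \<in> C" using assms unfolding category_of_partitions_def by auto
  moreover have "low pair_part = upp (invol pair_part)"
    by (simp add: pair_part_def invol_def low_def upp_def)
  ultimately have "comp pair_part (invol pair_part) \<in> C"
    using assms unfolding category_of_partitions_def by blast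
  moreover have "comp pair_part (invol pair_part) = (0,0,{})"
    by (simp add: comp_def pair_part_def invol_def low_def upp_def pts_def)
  ultimately show ?thesis by simp
qed

lemma idn_in:
  assumes "category_of_partitions C" shows "idn n \<in> C"
proof (induction n)
  case 0
  then show ?case using empty_in[OF assms] by (simp add: idn_def)
next
  case (Suc n)
  have "id_part \<in> C" using assms unfolding category_of_partitions_def by auto
  with Suc have "tensor (idn n) id_part \<in> C" using assms unfolding category_of_partitions_def by auto
  moreover have "tensor (idn n) id_part = idn (Suc n)"
    by (auto simp: tensor_def idn_def id_part_def shift_pt_def less_Suc_eq)
  ultimately show ?case by simp
qed



lemma pts0: "pts 0 n = {(True,j) | j. j < n}" by (auto simp: pts_def)

lemma img: "{(x,y). x \<in> pts 0 n \<and> y \<in> pts 0 n \<and> w!snd x = w!snd y} `` {(True,t)}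
   = (if t<n then {(True,j)|j. j<n \<and> w!j = w!t} else {})"
  by (auto simp: pts0)

lemma word_blocks:
  "pts 0 (length w') // {(x,y). x \<in> pts 0 (length w') \<and> y \<in> pts 0 (length w') \<and> w'!snd x = w'!snd y}
   = {{(True, j) | j. j < length w' \<and> w' ! j = a} | a. a \<in> set w'}"
  (is "?L = ?R")
proof (intro set_eqI iffI)
  fix X assume "X \<in> ?L"
  then obtain x where x: "X = {(x,y). x \<in> pts 0 (length w') \<and> y \<in> pts 0 (length w') \<and> w'!snd x = w'!snd y} `` {x}" "x \<in> pts 0 (length w')"
    by (rule quotientE)
  then obtain t where t0: "x = (True, t)" "t < length w'" by (auto simp: pts0)
  have "X = {(True, j) | j. j < length w' \<and> w' ! j = w'!t}"
    unfolding x(1) t0 img using t0 by simp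
  moreover have "w'!t \<in> set w'" using t0 by simp
  ultimately show "X \<in> ?R" by blast
next
  fix X assume "X \<in> ?R"
  then obtain a where a: "a \<in> set w'" "X = {(True, j) | j. j < length w' \<and> w' ! j = a}" by blast
  then obtain t where t: "t < length w'" "a = w'!t" by (auto simp: in_set_conv_nth)
  have X: "X = {(x,y). x \<in> pts 0 (length w') \<and> y \<in> pts 0 (length w') \<and> w'!snd x = w'!snd y} `` {(True,t)}" 
    unfolding img a t using t by simp
  have "(True,t) \<in> pts 0 (length w')" using t by (simp add: pts0)
  from quotientI[OF this] show "X \<in> ?L" unfolding X .
qed

lemma comp_word:
  fixes w w' :: "nat list" and q :: partition and L :: "nat\<times>nat \<Rightarrow> nat"
  assumes "upp q = length w" "low q = length w'"
   and inv: "\<And>a b. (a,b) \<in> block_rel emb_top (blk (word_part w)) \<union> block_rel emb_bot (blk q) \<Longrightarrow> L a = L b"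
   and bot: "\<And>t. t < length w' \<Longrightarrow> L (2,t) = w'!t"
   and conn: "\<And>t t'. t < length w' \<Longrightarrow> t' < length w' \<Longrightarrow> w'!t = w'!t' \<Longrightarrow>
        ((2,t),(2,t')) \<in> (block_rel emb_top (blk (word_part w)) \<union> block_rel emb_bot (blk q))\<^sup>*"
  shows "comp (word_part w) q = word_part w'"
proof -
  define BR where "BR = block_rel emb_top (blk (word_part w)) \<union> block_rel emb_bot (blk q)"
  have inv2: "(a,b) \<in> BR\<^sup>* \<Longrightarrow> L a = L b" for a b
  proof (induction rule: rtrancl_induct)
    case (step y z) then show ?case using inv[of y z] by (simp add: BR_def)
  qed simp
  define m where "m = length w'"
  have R: "{(x, y). x \<in> pts 0 m \<and> y \<in> pts 0 m \<and> (emb_res x, emb_res y) \<in> BR\<^sup>*}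
      = {(x,y). x \<in> pts 0 m \<and> y \<in> pts 0 m \<and> w'!snd x = w'!snd y}"
  proof (intro set_eqI iffI)
    fix z assume "z \<in> {(x, y). x \<in> pts 0 m \<and> y \<in> pts 0 m \<and> (emb_res x, emb_res y) \<in> BR\<^sup>*}"
    then obtain t t' where z: "z = ((True,t),(True,t'))" "t < m" "t' < m" "((2,t),(2,t')) \<in> BR\<^sup>*"
      by (auto simp: pts_def emb_res_def)
    then have "L (2,t) = L (2,t')" using inv2 by blast
    then show "z \<in> {(x,y). x \<in> pts 0 m \<and> y \<in> pts 0 m \<and> w'!snd x = w'!snd y}"
      using z bot by (auto simp: pts_def m_def)
  next
    fix z assume "z \<in> {(x,y). x \<in> pts 0 m \<and> y \<in> pts 0 m \<and> w'!snd x = w'!snd y}"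
    then obtain t t' where z: "z = ((True,t),(True,t'))" "t < m" "t' < m" "w'!t = w'!t'"
      by (auto simp: pts_def)
    then show "z \<in> {(x, y). x \<in> pts 0 m \<and> y \<in> pts 0 m \<and> (emb_res x, emb_res y) \<in> BR\<^sup>*}"
      using conn[of t t'] by (auto simp: pts_def emb_res_def BR_def m_def)
  qed
  have "comp (word_part w) q = (0, m, pts 0 m // {(x, y). x \<in> pts 0 m \<and> y \<in> pts 0 m \<and> (emb_res x, emb_res y) \<in> BR\<^sup>*})"
    unfolding comp_def BR_def m_def using assms(1,2) by (simp add: word_part_def)
  also have "\<dots> = (0, m, pts 0 m // {(x,y). x \<in> pts 0 m \<and> y \<in> pts 0 m \<and> w'!snd x = w'!snd y})"
    by (simp only: R)
  also have "\<dots> = word_part w'"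
    unfolding m_def word_blocks by (simp add: word_part_def)
  finally show ?thesis .
qed



lemma block_relI: "X \<in> B \<Longrightarrow> x \<in> X \<Longrightarrow> y \<in> X \<Longrightarrow> (e x, e y) \<in> block_rel e B"
  unfolding block_rel_def apply (rule CollectI) apply (rule exI[of _ x]) apply (rule exI[of _ y]) by blast
lemma block_relE: "(a,b) \<in> block_rel e B \<Longrightarrow> (\<And>X x y. X \<in> B \<Longrightarrow> x \<in> X \<Longrightarrow> y \<in> X \<Longrightarrow> a = e x \<Longrightarrow> b = e y \<Longrightarrow> P) \<Longrightarrow> P"
  unfolding block_rel_def by blast

abbreviation BRw :: "nat list \<Rightarrow> partition \<Rightarrow> ((nat\<times>nat)\<times>(nat\<times>nat)) set" where
  "BRw w q \<equiv> block_rel emb_top (blk (word_part w)) \<union> block_rel emb_bot (blk q)"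

lemma top_edge: "j < length w \<Longrightarrow> j' < length w \<Longrightarrow> w!j = w!j' \<Longrightarrow> ((1,j),(1,j')) \<in> BRw w q"
proof -
  assume a: "j < length w" "j' < length w" "w!j = w!j'"
  let ?X = "{(True, i) | i. i < length w \<and> w ! i = w!j}"
  have "?X \<in> blk (word_part w)" using a(1) by (auto simp: word_part_def)
  moreover have "(True,j) \<in> ?X" "(True,j') \<in> ?X" using a by auto
  ultimately have "(emb_top (True,j), emb_top (True,j')) \<in> block_rel emb_top (blk (word_part w))"
    by (rule block_relI)
  then show ?thesis by (simp add: emb_top_def)
qed

lemma bot_edge: "X \<in> blk q \<Longrightarrow> x \<in> X \<Longrightarrow> y \<in> X \<Longrightarrow> (emb_bot x, emb_bot y) \<in> BRw w q"
  by (rule UnI2, rule block_relI)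

lemma blk_tensor_idn: "blk (tensor (idn i) q0) = {{(False,t),(True,t)} | t. t<i} \<union> (\<lambda>X. shift_pt i i ` X) ` blk q0"
  by (simp add: tensor_def idn_def)

lemma id_edge: "t < i \<Longrightarrow> ((2,t),(1,t)) \<in> BRw w (tensor (idn i) q0) \<and> ((1,t),(2,t)) \<in> BRw w (tensor (idn i) q0)"
  using bot_edge[of "{(False,t),(True,t)}" "tensor (idn i) q0" "(True,t)" "(False,t)" w]
        bot_edge[of "{(False,t),(True,t)}" "tensor (idn i) q0" "(False,t)" "(True,t)" w]
  by (auto simp: blk_tensor_idn emb_bot_def)

lemma id_conn: "t < i \<Longrightarrow> t' < i \<Longrightarrow> i \<le> length w \<Longrightarrow> w!t = w!t' \<Longrightarrow>
   ((2,t),(2,t')) \<in> (BRw w (tensor (idn i) q0))\<^sup>*"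
proof -
  assume a: "t < i" "t' < i" "i \<le> length w" "w!t = w!t'"
  have "((2,t),(1,t)) \<in> BRw w (tensor (idn i) q0)" using id_edge a by blast
  moreover have "((1,t),(1,t')) \<in> BRw w (tensor (idn i) q0)" using top_edge a by auto
  moreover have "((1,t'),(2,t')) \<in> BRw w (tensor (idn i) q0)" using id_edge a by blast
  ultimately show ?thesis by (meson rtrancl.simps r_into_rtrancl rtrancl_trans)
qed

lemma inv_tensor:
  assumes "\<And>j j'. j < length w \<Longrightarrow> j' < length w \<Longrightarrow> w!j = w!j' \<Longrightarrow> L(1,j) = L(1,j')"
    and "\<And>t. t < i \<Longrightarrow> L(1,t) = L(2,t)"
    and "\<And>X x y. X \<in> blk q0 \<Longrightarrow> x \<in> X \<Longrightarrow> y \<in> X \<Longrightarrow> L (emb_bot (shift_pt i i x)) = L (emb_bot (shift_pt i i y))"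
    and "(a,b) \<in> BRw w (tensor (idn i) q0)"
  shows "L a = L b"
  using assms(4)
proof
  assume "(a,b) \<in> block_rel emb_top (blk (word_part w))"
  then obtain X x y where X: "X \<in> blk (word_part w)" "x \<in> X" "y \<in> X" "a = emb_top x" "b = emb_top y"
    by (rule block_relE)
  from X(1) obtain c where c: "X = {(True, i) | i. i < length w \<and> w ! i = c}" by (auto simp: word_part_def)
  from X(2) c obtain j where j: "x = (True,j)" "j < length w" "w!j = c" by blast
  from X(3) c obtain j' where j': "y = (True,j')" "j' < length w" "w!j' = c" by blast
  show ?thesis using assms(1)[of j j'] X(4,5) j j' by (simp add: emb_top_def)
next
  assume "(a,b) \<in> block_rel emb_bot (blk (tensor (idn i) q0))"
  then obtain X x y where X: "X \<in> blk (tensor (idn i) q0)" "x \<in> X" "y \<in> X" "a = emb_bot x" "b = emb_bot y"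
    by (elim block_relE) blast
  from X(1) show ?thesis unfolding blk_tensor_idn
  proof
    assume "X \<in> {{(False,t),(True,t)} | t. t<i}"
    then obtain t where "t < i" "X = {(False,t),(True,t)}" by blast
    then show ?thesis using X assms(2)[of t] by (auto simp: emb_bot_def)
  next
    assume "X \<in> (\<lambda>X. shift_pt i i ` X) ` blk q0"
    then obtain Y where "Y \<in> blk q0" "X = shift_pt i i ` Y" by blast
    then show ?thesis using X assms(3) by blast
  qed
qed

lemma apply_op:
  assumes C: "category_of_partitions C" and w: "word_part w \<in> C" and q0: "q0 \<in> C"
    and len: "length w = i + upp q0"
    and eq: "comp (word_part w) (tensor (idn i) q0) = word_part w'"
  shows "word_part w' \<in> C"
proof -
  have "tensor (idn i) q0 \<in> C" using C q0 idn_in[OF C] unfolding category_of_partitions_def by blast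
  moreover have "low (word_part w) = upp (tensor (idn i) q0)" using len
    by (simp add: word_part_def tensor_def idn_def)
  ultimately have "comp (word_part w) (tensor (idn i) q0) \<in> C" using C w
    unfolding category_of_partitions_def by blast
  then show ?thesis using eq by simp
qed

lemma conn_mid:
  assumes mid: "\<And>j j'. j<length w \<Longrightarrow> j'<length w \<Longrightarrow> \<phi>(w!j) = \<phi>(w!j') \<Longrightarrow> ((1,j),(1,j')) \<in> R\<^sup>*"
    and m: "\<And>t. t<length w' \<Longrightarrow> m t < length w \<and> ((2,t),(1,m t)) \<in> R \<and> ((1,m t),(2,t)) \<in> R \<and> w'!t = \<phi>(w!(m t))"
    and t: "t<length w'" "t'<length w'" "w'!t = w'!t'"
  shows "((2,t),(2,t')) \<in> R\<^sup>*"
proof -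
  have "((2,t),(1,m t)) \<in> R\<^sup>*" using m[OF t(1)] by blast
  also have "((1,m t),(1, m t')) \<in> R\<^sup>*" using mid m[OF t(1)] m[OF t(2)] t(3) by auto
  also have "((1,m t'),(2,t')) \<in> R\<^sup>*" using m[OF t(2)] by blast
  finally show ?thesis .
qed

lemma invol_pair: "invol pair_part = (2, 0, {{(False,0),(False,1)}})"
  by (simp add: invol_def pair_part_def)

lemma op_cap:
  assumes C: "category_of_partitions C" and w: "word_part (u@[a,a]) \<in> C"
  shows "word_part u \<in> C"
proof (rule apply_op[OF C w])
  show "invol pair_part \<in> C" using C unfolding category_of_partitions_def by blast
  show "length (u@[a,a]) = length u + upp (invol pair_part)" by (simp add: invol_pair)
  let ?w = "u@[a,a]" and ?i = "length u" and ?q = "tensor (idn (length u)) (invol pair_part)"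
  let ?L = "\<lambda>(n::nat,j). if n = 1 then ?w!j else u!j"
  show "comp (word_part ?w) ?q = word_part u"
  proof (rule comp_word[where L = ?L])
    show "upp ?q = length ?w" by (simp add: tensor_def idn_def invol_pair)
    show "low ?q = length u" by (simp add: tensor_def idn_def invol_pair)
    show "?L a = ?L b" if "(a,b) \<in> BRw ?w ?q" for a b
    proof (rule inv_tensor[OF _ _ _ that])
      show "?L (1, t) = ?L (2, t)" if "t < ?i" for t using that by (simp add: nth_append)
      show "?L (emb_bot (shift_pt ?i ?i x)) = ?L (emb_bot (shift_pt ?i ?i y))"
        if "X \<in> blk (invol pair_part)" "x \<in> X" "y \<in> X" for X x y
        using that by (auto simp: invol_pair shift_pt_def emb_bot_def nth_append)
    qed simp
    show "?L (2,t) = u!t" for t by simp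
    show "((2,t),(2,t')) \<in> (BRw ?w ?q)\<^sup>*" if "t < length u" "t' < length u" "u!t = u!t'" for t t'
      using id_conn[of t ?i t' ?w "invol pair_part"] that by (simp add: nth_append)
  qed
qed

lemma q0_edge: "X \<in> blk q0 \<Longrightarrow> x \<in> X \<Longrightarrow> y \<in> X \<Longrightarrow>
   (emb_bot (shift_pt i i x), emb_bot (shift_pt i i y)) \<in> BRw w (tensor (idn i) q0)"
  by (rule bot_edge[of "shift_pt i i ` X"]) (auto simp: blk_tensor_idn)

lemma emb_shift: "emb_bot (shift_pt i i (True,k)) = (2, i+k)" "emb_bot (shift_pt i i (False,k)) = (1, i+k)"
  by (auto simp: emb_bot_def shift_pt_def)

lemma b4_rot: "rot_left_up four_block = (1,3,{{(False,0),(True,0),(True,1),(True,2)}})"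
  by (auto simp: rot_left_up_def rot_map_def four_block_def)

lemma op_triple_b4:
  assumes C: "category_of_partitions C" and b4: "four_block \<in> C" and w: "word_part (u@[a]) \<in> C"
  shows "word_part (u@[a,a,a]) \<in> C"
proof (rule apply_op[OF C w])
  show "rot_left_up four_block \<in> C" using C b4 unfolding category_of_partitions_def
    by (auto simp: four_block_def)
  show "length (u@[a]) = length u + upp (rot_left_up four_block)" by (simp add: b4_rot)
  let ?w = "u@[a]" and ?w' = "u@[a,a,a]" and ?i = "length u" and ?qz = "rot_left_up four_block"
  let ?q = "tensor (idn (length u)) ?qz"
  let ?L = "\<lambda>(n::nat,j). if n = 1 then ?w!j else ?w'!j"
  show "comp (word_part ?w) ?q = word_part ?w'"
  proof (rule comp_word[where L = ?L])
    show "upp ?q = length ?w" by (simp add: tensor_def idn_def b4_rot)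
    show "low ?q = length ?w'" by (simp add: tensor_def idn_def b4_rot)
    show "?L a = ?L b" if "(a,b) \<in> BRw ?w ?q" for a b
    proof (rule inv_tensor[OF _ _ _ that])
      show "?L (1, t) = ?L (2, t)" if "t < ?i" for t using that by (simp add: nth_append)
      show "?L (emb_bot (shift_pt ?i ?i x)) = ?L (emb_bot (shift_pt ?i ?i y))"
        if "X \<in> blk ?qz" "x \<in> X" "y \<in> X" for X x y
        using that by (auto simp: b4_rot shift_pt_def emb_bot_def nth_append)
    qed simp
    show "?L (2,t) = ?w'!t" for t by simp
    show "((2,t),(2,t')) \<in> (BRw ?w ?q)\<^sup>*" if t: "t < length ?w'" "t' < length ?w'" "?w'!t = ?w'!t'" for t t'
    proof (rule conn_mid[where \<phi> = id and m = "\<lambda>t. min t ?i", OF _ _ t])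
      show "((1, j), 1, j') \<in> (BRw ?w ?q)\<^sup>*" if "j < length ?w" "j' < length ?w" "id (?w ! j) = id (?w ! j')" for j j'
        using top_edge[of j ?w j' ?q] that by auto
      fix s assume s: "s < length ?w'"
      show "min s ?i < length ?w \<and> ((2, s), 1, min s ?i) \<in> BRw ?w ?q \<and> ((1, min s ?i), 2, s) \<in> BRw ?w ?q \<and> ?w' ! s = id (?w ! min s ?i)"
      proof (cases "s < ?i")
        case True then show ?thesis using id_edge[of s ?i ?w ?qz] by (simp add: nth_append)
      next
        case False
        define k where "k = s - ?i"
        have sk: "s = ?i + k" "k < 3" using False s k_def by auto
        let ?X = "{(False,0),(True,0),(True,1),(True,2)} :: point set"
        have X: "?X \<in> blk ?qz" by (simp add: b4_rot)
        have "(True,k) \<in> ?X" using sk by auto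
        then have "((2, s), 1, ?i) \<in> BRw ?w ?q" "((1, ?i), 2, s) \<in> BRw ?w ?q"
          using q0_edge[OF X, of "(True,k)" "(False,0)" ?i ?w] q0_edge[OF X, of "(False,0)" "(True,k)" ?i ?w] sk
          by (auto simp: emb_shift)
        moreover have "?w' ! s = ?w ! ?i" using sk by (auto simp: nth_append less_Suc_eq numeral_3_eq_3)
        moreover have mn: "min s ?i = ?i" using False by simp
        ultimately show ?thesis unfolding mn by simp
      qed
    qed
  qed
qed

lemma op_pair:
  assumes C: "category_of_partitions C" and w: "word_part w \<in> C" and c: "c \<notin> set w"
  shows "word_part (w@[c,c]) \<in> C"
proof (rule apply_op[OF C w])
  show "pair_part \<in> C" using C unfolding category_of_partitions_def by blast
  show "length w = length w + upp pair_part" by (simp add: pair_part_def)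
  let ?w' = "w@[c,c]" and ?i = "length w" and ?qz = "pair_part"
  let ?q = "tensor (idn (length w)) ?qz"
  let ?L = "\<lambda>(n::nat,j). if n = 1 then w!j else ?w'!j"
  show "comp (word_part w) ?q = word_part ?w'"
  proof (rule comp_word[where L = ?L])
    show "upp ?q = length w" by (simp add: tensor_def idn_def pair_part_def)
    show "low ?q = length ?w'" by (simp add: tensor_def idn_def pair_part_def)
    show "?L a = ?L b" if "(a,b) \<in> BRw w ?q" for a b
    proof (rule inv_tensor[OF _ _ _ that])
      show "?L (1, t) = ?L (2, t)" if "t < ?i" for t using that by (simp add: nth_append)
      show "?L (emb_bot (shift_pt ?i ?i x)) = ?L (emb_bot (shift_pt ?i ?i y))"
        if "X \<in> blk ?qz" "x \<in> X" "y \<in> X" for X x y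
        using that by (auto simp: pair_part_def shift_pt_def emb_bot_def nth_append)
    qed simp
    show "?L (2,t) = ?w'!t" for t by simp
    show "((2,t),(2,t')) \<in> (BRw w ?q)\<^sup>*" if t: "t < length ?w'" "t' < length ?w'" "?w'!t = ?w'!t'" for t t'
    proof (cases "t < ?i")
      case True
      show ?thesis
      proof (cases "t' < ?i")
        case True
        then show ?thesis using id_conn[of t ?i t' w ?qz] \<open>t < ?i\<close> t by (simp add: nth_append)
      next
        case False
        then have "?w'!t' = c" using t by (auto simp: nth_append less_Suc_eq)
        moreover have "?w'!t \<in> set w" using True by (simp add: nth_append)
        ultimately show ?thesis using t c by simp
      qed
    next
      case False
      show ?thesis
      proof (cases "t' < ?i")
        case True
        then have "?w'!t' \<in> set w" by (simp add: nth_append)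
        moreover have "?w'!t = c" using t False by (auto simp: nth_append less_Suc_eq)
        ultimately show ?thesis using t c by simp
      next
        case False
        define k where "k = t - ?i"
        define k' where "k' = t' - ?i"
        have sk: "t = ?i + k" "k < 2" "t' = ?i + k'" "k' < 2" using False \<open>\<not> t < ?i\<close> t k_def k'_def by auto
        let ?X = "{(True,0),(True,1)} :: point set"
        have X: "?X \<in> blk ?qz" by (simp add: pair_part_def)
        have "(True,k) \<in> ?X" "(True,k') \<in> ?X" using sk by auto
        then have "((2, t), 2, t') \<in> BRw w ?q"
          using q0_edge[OF X, of "(True,k)" "(True,k')" ?i w] sk by (auto simp: emb_shift)
        then show ?thesis by blast
      qed
    qed
  qed
qed

lemma op_rho:
  assumes C: "category_of_partitions C" and r: "pair_positioner \<in> C" and w: "word_part (u@[x,y,z]) \<in> C"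
  shows "word_part (map (\<lambda>c. if c = y then x else c) u @ [(\<lambda>c. if c = y then x else c) z, x, x]) \<in> C"
proof (rule apply_op[OF C w r])
  define \<phi> where "\<phi> = (\<lambda>c::nat. if c = y then x else c)"
  show "length (u@[x,y,z]) = length u + upp pair_positioner" by (simp add: pair_positioner_def)
  let ?w = "u@[x,y,z]" and ?w' = "map \<phi> u @ [\<phi> z, x, x]" and ?i = "length u" and ?qz = "pair_positioner"
  let ?q = "tensor (idn (length u)) ?qz"
  let ?L = "\<lambda>(n::nat,j). if n = 1 then \<phi> (?w!j) else ?w'!j"
  have "comp (word_part ?w) ?q = word_part ?w'"
  proof (rule comp_word[where L = ?L])
    show "upp ?q = length ?w" by (simp add: tensor_def idn_def pair_positioner_def)
    show "low ?q = length ?w'" by (simp add: tensor_def idn_def pair_positioner_def)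
    show "?L a = ?L b" if "(a,b) \<in> BRw ?w ?q" for a b
    proof (rule inv_tensor[OF _ _ _ that])
      show "?L (1, t) = ?L (2, t)" if "t < ?i" for t using that by (simp add: nth_append)
      show "?L (emb_bot (shift_pt ?i ?i x)) = ?L (emb_bot (shift_pt ?i ?i y))"
        if "X \<in> blk ?qz" "x \<in> X" "y \<in> X" for X x y
        using that by (auto simp: pair_positioner_def shift_pt_def emb_bot_def nth_append \<phi>_def)
    qed simp
    show "?L (2,t) = ?w'!t" for t by simp
    show "((2,t),(2,t')) \<in> (BRw ?w ?q)\<^sup>*" if t: "t < length ?w'" "t' < length ?w'" "?w'!t = ?w'!t'" for t t'
    proof (rule conn_mid[where \<phi> = \<phi> and m = "\<lambda>t. if t < ?i then t else if t = ?i then ?i + 2 else ?i", OF _ _ t])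
      let ?X1 = "{(False,0),(False,1),(True,1),(True,2)} :: point set"
      let ?X2 = "{(False,2),(True,0)} :: point set"
      have X1: "?X1 \<in> blk ?qz" and X2: "?X2 \<in> blk ?qz" by (simp_all add: pair_positioner_def)
      have e01: "((1,?i+1),(1,?i)) \<in> BRw ?w ?q" "((1,?i),(1,?i+1)) \<in> BRw ?w ?q"
        using q0_edge[OF X1, of "(False,1)" "(False,0)" ?i ?w] q0_edge[OF X1, of "(False,0)" "(False,1)" ?i ?w]
        by (auto simp: emb_shift)
      show "((1, j), 1, j') \<in> (BRw ?w ?q)\<^sup>*" if j: "j < length ?w" "j' < length ?w" "\<phi> (?w ! j) = \<phi> (?w ! j')" for j j'
      proof (cases "?w!j = ?w!j'")
        case True then show ?thesis using top_edge[of j ?w j' ?q] j by auto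
      next
        case False
        have wi: "?w!?i = x" "?w!(?i+1) = y" "?i+1 < length ?w" "?i < length ?w" by (simp_all add: nth_append)
        from False j(3) have "(?w!j = y \<and> ?w!j' = x) \<or> (?w!j = x \<and> ?w!j' = y)"
          unfolding \<phi>_def by (auto split: if_splits)
        then show ?thesis
        proof
          assume a: "?w!j = y \<and> ?w!j' = x"
          have "((1,j),(1,?i+1)) \<in> (BRw ?w ?q)\<^sup>*" using top_edge[of j ?w "?i+1" ?q] j a wi by auto
          also have "((1,?i+1),(1,?i)) \<in> (BRw ?w ?q)\<^sup>*" using e01 by blast
          also have "((1,?i),(1,j')) \<in> (BRw ?w ?q)\<^sup>*" using top_edge[of ?i ?w j' ?q] j a wi by auto
          finally show ?thesis .
        next
          assume a: "?w!j = x \<and> ?w!j' = y"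
          have "((1,j),(1,?i)) \<in> (BRw ?w ?q)\<^sup>*" using top_edge[of j ?w "?i" ?q] j a wi by auto
          also have "((1,?i),(1,?i+1)) \<in> (BRw ?w ?q)\<^sup>*" using e01 by blast
          also have "((1,?i+1),(1,j')) \<in> (BRw ?w ?q)\<^sup>*" using top_edge[of "?i+1" ?w j' ?q] j a wi by auto
          finally show ?thesis .
        qed
      qed
      fix s assume s: "s < length ?w'"
      let ?m = "if s < ?i then s else if s = ?i then ?i + 2 else ?i"
      show "?m < length ?w \<and> ((2, s), 1, ?m) \<in> BRw ?w ?q \<and> ((1, ?m), 2, s) \<in> BRw ?w ?q \<and> ?w' ! s = \<phi> (?w ! ?m)"
      proof (cases "s < ?i")
        case True then show ?thesis using id_edge[of s ?i ?w ?qz] by (simp add: nth_append)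
      next
        case False
        show ?thesis
        proof (cases "s = ?i")
          case True
          then have "((2, s), 1, ?i+2) \<in> BRw ?w ?q" "((1, ?i+2), 2, s) \<in> BRw ?w ?q"
            using q0_edge[OF X2, of "(True,0)" "(False,2)" ?i ?w] q0_edge[OF X2, of "(False,2)" "(True,0)" ?i ?w]
            by (auto simp: emb_shift)
          then show ?thesis using True by (simp add: nth_append)
        next
          case False
          define k where "k = s - ?i"
          have sk: "s = ?i + k" "k = 1 \<or> k = 2" using False \<open>\<not> s < ?i\<close> s k_def by auto
          have "(True,k) \<in> ?X1" using sk by auto
          then have "((2, s), 1, ?i) \<in> BRw ?w ?q" "((1, ?i), 2, s) \<in> BRw ?w ?q"
            using q0_edge[OF X1, of "(True,k)" "(False,0)" ?i ?w] q0_edge[OF X1, of "(False,0)" "(True,k)" ?i ?w] sk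
            by (auto simp: emb_shift)
          moreover have "?w' ! s = \<phi> (?w ! ?i)" using sk by (auto simp: nth_append \<phi>_def)
          ultimately show ?thesis using False \<open>\<not> s < ?i\<close> by simp
        qed
      qed
    qed
  qed
  then show "comp (word_part ?w) ?q = word_part (map (\<lambda>c. if c = y then x else c) u @ [(\<lambda>c. if c = y then x else c) z, x, x])"
    by (simp add: \<phi>_def)
qed

lemma rot_block:
  fixes g :: "point \<Rightarrow> point"
  assumes g: "\<And>j. g (True, j) = (if j = 0 then (True, length w) else (True, j - 1))"
  shows "g ` {(True,j) | j. j < Suc (length w) \<and> (x#w)!j = a} = {(True,t) | t. t < Suc (length w) \<and> (w@[x])!t = a}"
proof (intro set_eqI iffI)
  fix z assume "z \<in> g ` {(True,j) | j. j < Suc (length w) \<and> (x#w)!j = a}"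
  then obtain j where j: "z = g (True,j)" "j < Suc (length w)" "(x#w)!j = a" by blast
  show "z \<in> {(True,t) | t. t < Suc (length w) \<and> (w@[x])!t = a}"
  proof (cases j)
    case 0 then show ?thesis using j g by auto
  next
    case (Suc j') then show ?thesis using j g by (auto simp: nth_append)
  qed
next
  fix z assume "z \<in> {(True,t) | t. t < Suc (length w) \<and> (w@[x])!t = a}"
  then obtain t where t: "z = (True,t)" "t < Suc (length w)" "(w@[x])!t = a" by blast
  show "z \<in> g ` {(True,j) | j. j < Suc (length w) \<and> (x#w)!j = a}"
  proof (cases "t < length w")
    case True
    then have "z = g (True, Suc t)" "(x#w)!Suc t = a" using t g by (auto simp: nth_append)
    then show ?thesis using True by blast
  next
    case False
    then have "t = length w" using t by simp
    then have "z = g (True, 0)" "(x#w)!0 = a" using t g by auto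
    then show ?thesis by blast
  qed
qed

lemma op_rot:
  assumes C: "category_of_partitions C" and p: "word_part (x#w) \<in> C"
  shows "word_part (w@[x]) \<in> C"
proof -
  have "rot_left_up (word_part (x#w)) \<in> C" using C p unfolding category_of_partitions_def
    by (auto simp: word_part_def)
  then have r: "rot_right_down (rot_left_up (word_part (x#w))) \<in> C" using C unfolding category_of_partitions_def
    by (auto simp: word_part_def rot_left_up_def rot_map_def)
  define f1 where "f1 = (\<lambda>x::point. if x = (True, 0) then (False, 0)
      else if fst x then (True, snd x - 1) else (False, snd x + 1))"
  define f2 where "f2 = (\<lambda>y::point. if y = (False, 0) then (True, length w) else y)"
  define B where "B = blk (word_part (x#w))"
  have hu: "upp (word_part (x#w)) + 1 = 1" and hl: "low (word_part (x#w)) - 1 = length w"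
    by (simp_all add: word_part_def)
  have e1: "rot_left_up (word_part (x#w)) = (1, length w, (\<lambda>X. f1 ` X) ` B)"
    unfolding rot_left_up_def f1_def[symmetric] hu hl rot_map_def B_def by simp
  have e2: "rot_right_down (rot_left_up (word_part (x#w))) = (0, Suc (length w), (\<lambda>X. f2 ` X) ` ((\<lambda>X. f1 ` X) ` B))"
    unfolding e1 rot_right_down_def rot_map_def upp_simp low_simp f2_def by simp
  define g where "g = f2 \<circ> f1"
  have g: "g (True, j) = (if j = 0 then (True, length w) else (True, j - 1))" for j
    by (simp add: g_def f1_def f2_def)
  have "rot_right_down (rot_left_up (word_part (x#w))) = (0, Suc (length w), (\<lambda>X. g ` X) ` B)"
    unfolding e2 by (simp add: image_image g_def image_comp)
  also have "\<dots> = word_part (w@[x])"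
  proof -
    have rb: "(\<lambda>a. g ` {(True, j) |j. j < Suc (length w) \<and> (x # w) ! j = a}) =
              (\<lambda>a. {(True, t) |t. t < Suc (length w) \<and> (w @ [x]) ! t = a})"
      using rot_block[OF g] by blast
    show ?thesis
      unfolding word_part_def B_def blk_simp Setcompr_eq_image image_image length_Cons rb by simp
  qed
  finally show ?thesis using r by simp
qed



lemma swap:
  assumes C: "category_of_partitions C" shows "word_part (u@v) \<in> C \<Longrightarrow> word_part (v@u) \<in> C"
proof (induction u arbitrary: v)
  case Nil then show ?case by simp
next
  case (Cons x u)
  have "word_part (x # (u@v)) \<in> C" using Cons.prems by simp
  then have "word_part ((u@v)@[x]) \<in> C" by (rule op_rot[OF C])
  then have "word_part (u@(v@[x])) \<in> C" by simp
  then have "word_part ((v@[x])@u) \<in> C" by (rule Cons.IH)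
  then show ?case by simp
qed

lemma local_op:
  assumes C: "category_of_partitions C" and op: "\<And>u. word_part (u@s) \<in> C \<Longrightarrow> word_part (u@t) \<in> C"
    and w: "word_part (u@s@v) \<in> C"
  shows "word_part (u@t@v) \<in> C"
proof -
  have "word_part ((u@s)@v) \<in> C" using w by simp
  then have "word_part (v@(u@s)) \<in> C" by (rule swap[OF C])
  then have "word_part ((v@u)@s) \<in> C" by simp
  then have "word_part ((v@u)@t) \<in> C" by (rule op)
  then have "word_part (v@(u@t)) \<in> C" by simp
  then have "word_part ((u@t)@v) \<in> C" by (rule swap[OF C])
  then show ?thesis by simp
qed

lemma cap_mid:
  assumes C: "category_of_partitions C" and w: "word_part (u@[a,a]@v) \<in> C"
  shows "word_part (u@v) \<in> C"
  using local_op[OF C _ w, of "[]"] op_cap[OF C] by simp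

lemma reduce_runs:
  assumes C: "category_of_partitions C"
  shows "word_part (u @ replicate (m + 2*d) a @ v) \<in> C \<Longrightarrow> word_part (u @ replicate m a @ v) \<in> C"
proof (induction d)
  case 0 then show ?case by simp
next
  case (Suc d)
  have "replicate (m + 2 * Suc d) a = [a,a] @ replicate (m + 2*d) a"
    by (simp add: replicate_add[symmetric])
  then have "word_part (u @ [a,a] @ (replicate (m + 2*d) a @ v)) \<in> C" using Suc.prems by simp
  then have "word_part (u @ (replicate (m + 2*d) a @ v)) \<in> C" by (rule cap_mid[OF C])
  then show ?case using Suc.IH by simp
qed

definition triple_ok :: "partition set \<Rightarrow> bool" where
  "triple_ok C \<longleftrightarrow> (\<forall>u a. word_part (u@[a]) \<in> C \<longrightarrow> word_part (u@[a,a,a]) \<in> C)"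

lemma grow_runs:
  assumes C: "category_of_partitions C" and T: "triple_ok C" and m: "m \<ge> 1"
  shows "word_part (u @ replicate m a @ v) \<in> C \<Longrightarrow> word_part (u @ replicate (m + 2*d) a @ v) \<in> C"
proof (induction d)
  case 0 then show ?case by simp
next
  case (Suc d)
  have w: "word_part (u @ replicate (m + 2*d) a @ v) \<in> C" using Suc by simp
  obtain n where n: "m + 2*d = Suc n" using m by (cases "m + 2*d") auto
  have "word_part (u @ [a] @ (replicate n a @ v)) \<in> C" using w n by simp
  moreover have op: "\<And>u'. word_part (u'@[a]) \<in> C \<Longrightarrow> word_part (u'@[a,a,a]) \<in> C"
    using T by (simp add: triple_ok_def)
  ultimately have "word_part (u @ [a,a,a] @ (replicate n a @ v)) \<in> C"
    using local_op[OF C op] by blast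
  moreover have "replicate (m + 2 * Suc d) a = [a,a,a] @ replicate n a" using n by simp
  ultimately show ?case by simp
qed

lemma triple_b4: "category_of_partitions C \<Longrightarrow> four_block \<in> C \<Longrightarrow> triple_ok C"
  unfolding triple_ok_def using op_triple_b4 by blast

lemma fresh: "\<exists>c::nat. c \<notin> set xs"
  using finite_set[of xs] by (meson ex_new_if_finite infinite_UNIV_nat)

lemma triple_rho:
  assumes C: "category_of_partitions C" and r: "pair_positioner \<in> C" shows "triple_ok C"
  unfolding triple_ok_def
proof (intro allI impI)
  fix u a assume w: "word_part (u@[a]) \<in> C"
  obtain c where c: "c \<notin> set (a#u)" using fresh by blast
  have "word_part ((u@[a])@[c,c]) \<in> C" using op_pair[OF C w] c by auto
  then have "word_part (u@[a,c,c]) \<in> C" by simp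
  from op_rho[OF C r this] have "word_part (map (\<lambda>x. if x = c then a else x) u @ [a,a,a]) \<in> C" by simp
  moreover have "map (\<lambda>x. if x = c then a else x) u = u" using c by (induction u) auto
  ultimately show "word_part (u@[a,a,a]) \<in> C" by simp
qed

lemma move_pair:
  assumes C: "category_of_partitions C" and r: "pair_positioner \<in> C"
  shows "word_part (u@[a,a]@v) \<in> C \<Longrightarrow> word_part (u@v@[a,a]) \<in> C"
proof (induction v arbitrary: u)
  case Nil then show ?case by simp
next
  case (Cons z v)
  have "word_part (u@[a,a,z]@v) \<in> C" using Cons.prems by simp
  moreover have op: "word_part (u'@[z,a,a]) \<in> C" if "word_part (u'@[a,a,z]) \<in> C" for u'
  proof -
    from op_rho[OF C r that] show "word_part (u'@[z,a,a]) \<in> C"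
      by (simp add: if_distrib cong: if_cong)
  qed
  ultimately have "word_part (u@[z,a,a]@v) \<in> C" using local_op[OF C op] by blast
  then have "word_part ((u@[z])@[a,a]@v) \<in> C" by simp
  then have "word_part ((u@[z])@v@[a,a]) \<in> C" by (rule Cons.IH)
  then show ?case by simp
qed

lemma insert_pair:
  assumes C: "category_of_partitions C" and r: "pair_positioner \<in> C" and w: "word_part (u@v) \<in> C"
  shows "word_part (u@[a,a]@v) \<in> C"
proof -
  have end_ins: "word_part (x@[a,a]) \<in> C" if x: "word_part x \<in> C" for x
  proof (cases "a \<in> set x")
    case False then show ?thesis using op_pair[OF C x] by simp
  next
    case True
    then obtain r1 r2 where x': "x = r1 @ a # r2" by (meson split_list)
    have "word_part (r1@[a]@r2) \<in> C" using x x' by simp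
    moreover have op: "\<And>u'. word_part (u'@[a]) \<in> C \<Longrightarrow> word_part (u'@[a,a,a]) \<in> C"
      using triple_rho[OF C r] by (simp add: triple_ok_def)
    ultimately have "word_part (r1@[a,a,a]@r2) \<in> C"
      using local_op[OF C op] by blast
    then have "word_part ((r1@[a])@[a,a]@r2) \<in> C" by simp
    then have "word_part ((r1@[a])@r2@[a,a]) \<in> C" by (rule move_pair[OF C r])
    then show ?thesis using x' by simp
  qed
  have "word_part (v@u) \<in> C" using swap[OF C w] .
  then have "word_part ((v@u)@[a,a]) \<in> C" by (rule end_ins)
  then have "word_part (v@(u@[a,a])) \<in> C" by simp
  then have "word_part ((u@[a,a])@v) \<in> C" by (rule swap[OF C])
  then show ?thesis by simp
qed

lemma exp_Cons: "exp_word (x#xs) (k#ks) = replicate k x @ exp_word xs ks"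
  by (simp add: exp_word_def)

lemma runs:
  "length ks = length xs \<Longrightarrow>
   (\<forall>k\<in>set ks. \<forall>u v a. word_part (u@replicate (f k) a@v) \<in> C \<longrightarrow> word_part (u@replicate (g k) a@v) \<in> C) \<Longrightarrow>
   word_part (u @ exp_word xs (map f ks) @ v) \<in> C \<Longrightarrow> word_part (u @ exp_word xs (map g ks) @ v) \<in> C"
proof (induction xs arbitrary: ks u)
  case Nil then show ?case by (simp add: exp_word_def)
next
  case (Cons x xs)
  then obtain k ks' where ks: "ks = k # ks'" by (cases ks) auto
  have "word_part (u @ replicate (f k) x @ (exp_word xs (map f ks') @ v)) \<in> C"
    using Cons.prems ks by (simp add: exp_Cons)
  then have "word_part (u @ replicate (g k) x @ (exp_word xs (map f ks') @ v)) \<in> C"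
    using Cons.prems(2) ks by simp
  then have "word_part ((u @ replicate (g k) x) @ exp_word xs (map f ks') @ v) \<in> C" by simp
  then have "word_part ((u @ replicate (g k) x) @ exp_word xs (map g ks') @ v) \<in> C"
    using Cons.IH[of ks' "u @ replicate (g k) x"] Cons.prems ks by simp
  then show ?case using ks by (simp add: exp_Cons)
qed

lemma decomp1: "(k::nat) \<ge> 1 \<Longrightarrow> \<exists>d. k = (if odd k then 1 else 2) + 2*d"
proof -
  assume "k \<ge> 1"
  show ?thesis
  proof (cases "odd k")
    case True then obtain d where "k = 2*d+1" using oddE by blast
    then show ?thesis using True by auto
  next
    case False then obtain d where "k = 2*d" by blast
    with \<open>k \<ge> 1\<close> have "k = 2 + 2*(d-1)" by auto
    then show ?thesis using False by auto
  qed
qed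

lemma decomp2: "\<exists>d. (k::nat) = (if odd k then 1 else 0) + 2*d"
proof (cases "odd k")
  case True then obtain d where "k = 2*d+1" using oddE by blast
  then show ?thesis using True by auto
next
  case False then obtain d where "k = 2*d" by blast
  then show ?thesis using False by auto
qed

theorem mainTheorem3:
  fixes C :: "partition set" and xs ks :: "nat list"
  assumes "category_of_partitions C"
    and "length ks = length xs"
    and "\<forall>k\<in>set ks. k \<ge> 1"
    and "\<forall>j. Suc j < length xs \<longrightarrow> xs ! j \<noteq> xs ! Suc j"
  shows "(four_block \<in> C \<longrightarrow>
            (word_part (exp_word xs ks) \<in> C \<longleftrightarrow>
             word_part (exp_word xs (map (\<lambda>k. if odd k then 1 else 2) ks)) \<in> C))
       \<and> (pair_positioner \<in> C \<longrightarrow>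
            (word_part (exp_word xs ks) \<in> C \<longleftrightarrow>
             word_part (exp_word xs (map (\<lambda>k. if odd k then 1 else 0) ks)) \<in> C))"
proof -
  note C = assms(1) and len = assms(2) and pos = assms(3)
  define f1 where "f1 = (\<lambda>k::nat. if odd k then 1 else (2::nat))"
  define f2 where "f2 = (\<lambda>k::nat. if odd k then 1 else (0::nat))"
  have mid: "exp_word xs ks' = [] @ exp_word xs ks' @ []" for ks' by simp
  have mapid: "map id ks = ks" by simp
  have fwd1: "word_part (exp_word xs ks) \<in> C \<Longrightarrow> word_part (exp_word xs (map f1 ks)) \<in> C"
  proof -
    assume a: "word_part (exp_word xs ks) \<in> C"
    have "\<forall>k\<in>set ks. \<forall>u v c. word_part (u@replicate (id k) c@v) \<in> C \<longrightarrow> word_part (u@replicate (f1 k) c@v) \<in> C"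
    proof (intro ballI allI impI)
      fix k u v c assume k: "k \<in> set ks" and w: "word_part (u@replicate (id k) c@v) \<in> C"
      obtain d where d: "k = f1 k + 2*d" using decomp1[of k] pos k unfolding f1_def by auto
      show "word_part (u@replicate (f1 k) c@v) \<in> C"
        using reduce_runs[OF C, of u "f1 k" d c v] w d by simp
    qed
    then show ?thesis using runs[where f=id and g=f1 and C=C and u="[]" and v="[]", OF len] a by (simp add: mapid)
  qed
  have fwd2: "word_part (exp_word xs ks) \<in> C \<Longrightarrow> word_part (exp_word xs (map f2 ks)) \<in> C"
  proof -
    assume a: "word_part (exp_word xs ks) \<in> C"
    have "\<forall>k\<in>set ks. \<forall>u v c. word_part (u@replicate (id k) c@v) \<in> C \<longrightarrow> word_part (u@replicate (f2 k) c@v) \<in> C"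
    proof (intro ballI allI impI)
      fix k u v c assume k: "k \<in> set ks" and w: "word_part (u@replicate (id k) c@v) \<in> C"
      obtain d where d: "k = f2 k + 2*d" using decomp2[of k] unfolding f2_def by auto
      show "word_part (u@replicate (f2 k) c@v) \<in> C"
        using reduce_runs[OF C, of u "f2 k" d c v] w d by simp
    qed
    then show ?thesis using runs[where f=id and g=f2 and C=C and u="[]" and v="[]", OF len] a by (simp add: mapid)
  qed
  have back1: "triple_ok C \<Longrightarrow> word_part (exp_word xs (map f1 ks)) \<in> C \<Longrightarrow> word_part (exp_word xs ks) \<in> C"
  proof -
    assume T: "triple_ok C" and a: "word_part (exp_word xs (map f1 ks)) \<in> C"
    have "\<forall>k\<in>set ks. \<forall>u v c. word_part (u@replicate (f1 k) c@v) \<in> C \<longrightarrow> word_part (u@replicate (id k) c@v) \<in> C"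
    proof (intro ballI allI impI)
      fix k u v c assume k: "k \<in> set ks" and w: "word_part (u@replicate (f1 k) c@v) \<in> C"
      obtain d where d: "k = f1 k + 2*d" using decomp1[of k] pos k unfolding f1_def by auto
      have "f1 k \<ge> 1" by (simp add: f1_def)
      then show "word_part (u@replicate (id k) c@v) \<in> C"
        using grow_runs[OF C T, of "f1 k" u c v d] w d by simp
    qed
    then show ?thesis using runs[where f=f1 and g=id and C=C and u="[]" and v="[]", OF len] a by (simp add: mapid)
  qed
  have back2: "pair_positioner \<in> C \<Longrightarrow> word_part (exp_word xs (map f2 ks)) \<in> C \<Longrightarrow> word_part (exp_word xs (map f1 ks)) \<in> C"
  proof -
    assume r: "pair_positioner \<in> C" and a: "word_part (exp_word xs (map f2 ks)) \<in> C"
    have "\<forall>k\<in>set ks. \<forall>u v c. word_part (u@replicate (f2 k) c@v) \<in> C \<longrightarrow> word_part (u@replicate (f1 k) c@v) \<in> C"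
    proof (intro ballI allI impI)
      fix k u v c assume k: "k \<in> set ks" and w: "word_part (u@replicate (f2 k) c@v) \<in> C"
      show "word_part (u@replicate (f1 k) c@v) \<in> C"
      proof (cases "odd k")
        case True then show ?thesis using w by (simp add: f1_def f2_def)
      next
        case False
        then have "word_part (u@v) \<in> C" using w by (simp add: f2_def)
        then have "word_part (u@[c,c]@v) \<in> C" by (rule insert_pair[OF C r])
        then show ?thesis using False by (simp add: f1_def numeral_2_eq_2)
      qed
    qed
    then show ?thesis using runs[where f=f2 and g=f1 and C=C and u="[]" and v="[]", OF len] a by simp
  qed
  show ?thesis
    using fwd1 fwd2 back1 back2 triple_b4[OF C] triple_rho[OF C] unfolding f1_def f2_def by blast
qed


end
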